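(* Let $F$ be a field, let $A_n$ be a Cayley--Dickson algebra over $F$ and $A_{n+1}=A_n\{\gamma_n\}$ for some $\gamma_n\in F^\times$. Let $a,b\in A_n$ be alternative elements of $A_n$, and assume that either $a\in F$, or $b\in F$, or $F+Fa=F+Fb$. Then $(a,b)$ is an alternative element of $A_{n+1}$.
   Context: For an $F$-algebra $B$ with involution $a\mapsto\bar a$ and $\gamma\in F^\times$, the Cayley--Dickson double $B\{\gamma\}$ is $B\times B$ with componentwise addition and scalar multiplication, product $(a,b)(c,d)=(ac+\gamma\bar d b,\ da+b\bar c)$ and involution $\overline{(a,b)}=(\bar a,-b)$. Cayley--Dickson algebras over $F$: $A_1=F[\ell_1:\ell_1^2=\ell_1+\mu]=F+F\ell_1$ with $\mu\in F$, $4\mu+1\neq 0$, and involution $\overline{\alpha+\beta\ell_1}=(\alpha+\beta)-\beta\ell_1$; then $A_{k+1}=A_k\{\gamma_k\}$ with $\gamma_k\in F^\times$. ($F$ is identified with $F\cdot 1$.) An element $a$ of an algebra $A$ is alternative if $a(ab)=a^2b$ and $(ba)a=ba^2$ for all $b\in A$. *)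

theory Defs
  imports Main
begin

text \<open>Elements of the Cayley--Dickson algebra A_n over a field are encoded as
coordinate functions nat => 'a supported on indices < 2^n.
A_1 = F + F l1: coordinate 0 is the F-part, coordinate 1 the l1-part.
A_(k+1) = A_k x A_k: a pair (a,b) is stored with a in coordinates < 2^k and
b in coordinates 2^k .. 2^(k+1)-1.  The identity 1 (hence F = F*1) sits at
coordinate 0 at every level.  Level 0 (just F) is only an auxiliary base.\<close>

definition cd_carrier :: "nat \<Rightarrow> (nat \<Rightarrow> 'a::field) set" where
  "cd_carrier n = {x. \<forall>i. 2 ^ n \<le> i \<longrightarrow> x i = 0}"

definition cd_lo :: "nat \<Rightarrow> (nat \<Rightarrow> 'a::field) \<Rightarrow> nat \<Rightarrow> 'a" where
  "cd_lo n x = (\<lambda>i. if i < 2 ^ n then x i else 0)"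

definition cd_hi :: "nat \<Rightarrow> (nat \<Rightarrow> 'a::field) \<Rightarrow> nat \<Rightarrow> 'a" where
  "cd_hi n x = (\<lambda>i. if i < 2 ^ n then x (i + 2 ^ n) else 0)"

definition cd_pair :: "nat \<Rightarrow> (nat \<Rightarrow> 'a::field) \<Rightarrow> (nat \<Rightarrow> 'a) \<Rightarrow> nat \<Rightarrow> 'a" where
  "cd_pair n a b = (\<lambda>i. if i < 2 ^ n then a i
                        else if i < 2 ^ Suc n then b (i - 2 ^ n) else 0)"

definition cd_add :: "(nat \<Rightarrow> 'a::field) \<Rightarrow> (nat \<Rightarrow> 'a) \<Rightarrow> nat \<Rightarrow> 'a" where
  "cd_add x y = (\<lambda>i. x i + y i)"

definition cd_smul :: "'a::field \<Rightarrow> (nat \<Rightarrow> 'a) \<Rightarrow> nat \<Rightarrow> 'a" where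
  "cd_smul c x = (\<lambda>i. c * x i)"

definition cd_neg :: "(nat \<Rightarrow> 'a::field) \<Rightarrow> nat \<Rightarrow> 'a" where
  "cd_neg x = (\<lambda>i. - x i)"

definition cd_scalar :: "'a::field \<Rightarrow> nat \<Rightarrow> 'a" where
  "cd_scalar c = (\<lambda>i. if i = 0 then c else 0)"

fun cd_conj :: "nat \<Rightarrow> (nat \<Rightarrow> 'a::field) \<Rightarrow> nat \<Rightarrow> 'a" where
  "cd_conj 0 x = (\<lambda>i. if i = 0 then x 0 else 0)"
| "cd_conj (Suc 0) x = (\<lambda>i. if i = 0 then x 0 + x 1 else if i = 1 then - x 1 else 0)"
| "cd_conj (Suc (Suc n)) x =
     cd_pair (Suc n) (cd_conj (Suc n) (cd_lo (Suc n) x)) (cd_neg (cd_hi (Suc n) x))"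

text \<open>Multiplication on A_n with parameters mu (for A_1) and gamma
(A_(k+1) = A_k{gamma k}).\<close>
fun cd_mul :: "'a::field \<Rightarrow> (nat \<Rightarrow> 'a) \<Rightarrow> nat \<Rightarrow> (nat \<Rightarrow> 'a) \<Rightarrow> (nat \<Rightarrow> 'a) \<Rightarrow> nat \<Rightarrow> 'a" where
  "cd_mul \<mu> \<gamma> 0 x y = (\<lambda>i. if i = 0 then x 0 * y 0 else 0)"
| "cd_mul \<mu> \<gamma> (Suc 0) x y =
     (\<lambda>i. if i = 0 then x 0 * y 0 + \<mu> * (x 1 * y 1)
          else if i = 1 then x 0 * y 1 + x 1 * y 0 + x 1 * y 1 else 0)"
| "cd_mul \<mu> \<gamma> (Suc (Suc n)) x y =
     (let m = Suc n; a = cd_lo m x; b = cd_hi m x; c = cd_lo m y; d = cd_hi m y in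
      cd_pair m
        (cd_add (cd_mul \<mu> \<gamma> m a c) (cd_smul (\<gamma> m) (cd_mul \<mu> \<gamma> m (cd_conj m d) b)))
        (cd_add (cd_mul \<mu> \<gamma> m d a) (cd_mul \<mu> \<gamma> m b (cd_conj m c))))"

definition cd_alternative :: "'a::field \<Rightarrow> (nat \<Rightarrow> 'a) \<Rightarrow> nat \<Rightarrow> (nat \<Rightarrow> 'a) \<Rightarrow> bool" where
  "cd_alternative \<mu> \<gamma> n a \<longleftrightarrow> a \<in> cd_carrier n \<and>
     (\<forall>b\<in>cd_carrier n.
        cd_mul \<mu> \<gamma> n a (cd_mul \<mu> \<gamma> n a b) = cd_mul \<mu> \<gamma> n (cd_mul \<mu> \<gamma> n a a) b \<and>
        cd_mul \<mu> \<gamma> n (cd_mul \<mu> \<gamma> n b a) a = cd_mul \<mu> \<gamma> n b (cd_mul \<mu> \<gamma> n a a))"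

definition cd_span1 :: "(nat \<Rightarrow> 'a::field) \<Rightarrow> (nat \<Rightarrow> 'a) set" where
  "cd_span1 a = {cd_add (cd_scalar \<alpha>) (cd_smul \<beta> a) | \<alpha> \<beta>. True}"

end

theory Submission imports Defs "HOL-Library.Function_Algebras" begin

definition K :: "'a::field \<Rightarrow> nat \<Rightarrow> 'a" where "K c = (\<lambda>_. c)"

lemma K_apply: "K c i = c" by (simp add: K_def)

declare minus_apply[simp del] uminus_apply[simp del] plus_fun_apply[simp del] times_fun_apply[simp del] zero_fun_apply[simp del] one_fun_apply[simp del]
lemmas fun_apps = K_apply plus_fun_apply times_fun_apply zero_fun_apply one_fun_apply minus_apply uminus_apply

lemma K_mult: "K (a*b) = K a * K b" by (simp add: fun_eq_iff fun_apps)
lemma K_add: "K (a+b) = K a + K b" by (simp add: fun_eq_iff fun_apps)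
lemma K_diff: "K (a-b) = K a - K b" by (simp add: fun_eq_iff fun_apps)
lemma K_minus: "K (-a) = - K a" by (simp add: fun_eq_iff fun_apps)
lemma K_0[simp]: "K 0 = 0" by (simp add: fun_eq_iff fun_apps)
lemma K_1[simp]: "K 1 = 1" by (simp add: fun_eq_iff fun_apps)

lemma cd_add_eq[simp]: "cd_add x y = x + y" by (simp add: cd_add_def fun_eq_iff fun_apps)
lemma cd_neg_eq[simp]: "cd_neg x = - x" by (simp add: cd_neg_def fun_eq_iff fun_apps)
lemma cd_smul_eq[simp]: "cd_smul c x = K c * x" by (simp add: cd_smul_def fun_eq_iff fun_apps)

lemma car_iff: "x \<in> cd_carrier n \<longleftrightarrow> (\<forall>i. 2^n \<le> i \<longrightarrow> x i = 0)"
  by (simp add: cd_carrier_def)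

lemma car_add[simp]: "x \<in> cd_carrier n \<Longrightarrow> y \<in> cd_carrier n \<Longrightarrow> x + y \<in> cd_carrier n"
  by (simp add: car_iff fun_apps)
lemma car_diff[simp]: "x \<in> cd_carrier n \<Longrightarrow> y \<in> cd_carrier n \<Longrightarrow> x - y \<in> cd_carrier n"
  by (simp add: car_iff fun_apps)
lemma car_uminus[simp]: "x \<in> cd_carrier n \<Longrightarrow> - x \<in> cd_carrier n"
  by (simp add: car_iff fun_apps)
lemma car_Kmult[simp]: "x \<in> cd_carrier n \<Longrightarrow> K c * x \<in> cd_carrier n"
  by (simp add: car_iff fun_apps)
lemma car_0[simp]: "0 \<in> cd_carrier n"
  by (simp add: car_iff fun_apps)
lemma car_scalar[simp]: "cd_scalar c \<in> cd_carrier n"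
  by (simp add: car_iff fun_apps cd_scalar_def)
lemma car_pair[simp]: "cd_pair m a b \<in> cd_carrier (Suc m)"
  by (simp add: car_iff fun_apps cd_pair_def)
lemma car_lo[simp]: "cd_lo m x \<in> cd_carrier m"
  by (simp add: car_iff fun_apps cd_lo_def)
lemma car_hi[simp]: "cd_hi m x \<in> cd_carrier m"
  by (simp add: car_iff fun_apps cd_hi_def)

lemma lo_pair[simp]: "a \<in> cd_carrier m \<Longrightarrow> cd_lo m (cd_pair m a b) = a"
  by (auto simp add: car_iff fun_apps cd_lo_def cd_pair_def fun_eq_iff )
lemma hi_pair[simp]: "b \<in> cd_carrier m \<Longrightarrow> cd_hi m (cd_pair m a b) = b"
  by (auto simp add: car_iff fun_apps cd_hi_def cd_pair_def fun_eq_iff )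
lemma pair_lohi: "x \<in> cd_carrier (Suc m) \<Longrightarrow> cd_pair m (cd_lo m x) (cd_hi m x) = x"
  by (auto simp add: car_iff fun_apps cd_hi_def cd_lo_def cd_pair_def fun_eq_iff )
lemma pair_add: "cd_pair m a b + cd_pair m c d = cd_pair m (a+c) (b+d)"
  by (auto simp add: cd_pair_def fun_eq_iff fun_apps)
lemma pair_diff: "cd_pair m a b - cd_pair m c d = cd_pair m (a-c) (b-d)"
  by (auto simp add: cd_pair_def fun_eq_iff fun_apps)
lemma pair_uminus: "- cd_pair m a b = cd_pair m (-a) (-b)"
  by (auto simp add: cd_pair_def fun_eq_iff fun_apps)
lemma pair_Kmult: "K c * cd_pair m a b = cd_pair m (K c * a) (K c * b)"
  by (auto simp add: cd_pair_def fun_eq_iff fun_apps)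
lemma pair_0: "cd_pair m 0 0 = 0"
  by (auto simp add: cd_pair_def fun_eq_iff fun_apps)
lemma pair_at0[simp]: "cd_pair m a b 0 = a 0"
  by (simp add: cd_pair_def)
lemma scalar_pair: "cd_scalar c = cd_pair m (cd_scalar c) 0"
  by (auto simp add: cd_pair_def cd_scalar_def fun_eq_iff fun_apps)
lemma pair_eq: "a \<in> cd_carrier m \<Longrightarrow> b \<in> cd_carrier m \<Longrightarrow> c \<in> cd_carrier m \<Longrightarrow> d \<in> cd_carrier m
  \<Longrightarrow> (cd_pair m a b = cd_pair m c d) = (a = c \<and> b = d)"
  by (metis lo_pair hi_pair)
lemma pair_obtain:
  assumes "x \<in> cd_carrier (Suc m)"
  obtains a b where "a \<in> cd_carrier m" "b \<in> cd_carrier m" "x = cd_pair m a b"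
  using pair_lohi[OF assms] car_lo car_hi by metis

lemma lo_add: "cd_lo m (x + y) = cd_lo m x + cd_lo m y"
  by (auto simp add: cd_lo_def fun_eq_iff fun_apps)
lemma hi_add: "cd_hi m (x + y) = cd_hi m x + cd_hi m y"
  by (auto simp add: cd_hi_def fun_eq_iff fun_apps)
lemma lo_Kmult: "cd_lo m (K c * x) = K c * cd_lo m x"
  by (auto simp add: cd_lo_def fun_eq_iff fun_apps)
lemma hi_Kmult: "cd_hi m (K c * x) = K c * cd_hi m x"
  by (auto simp add: cd_hi_def fun_eq_iff fun_apps)

lemma car_conj[simp]: "cd_conj n x \<in> cd_carrier n"
proof (induction n x rule: cd_conj.induct)
  case (1 x) then show ?case by (simp add: car_iff fun_apps)
next
  case (2 x) then show ?case by (simp add: car_iff fun_apps)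
next
  case (3 n x) then show ?case by simp
qed

definition is_K :: "(nat \<Rightarrow> 'a::field) \<Rightarrow> bool" where "is_K k \<longleftrightarrow> k = K (k 0)"

lemma is_K_K[simp]: "is_K (K c)" by (simp add: is_K_def K_apply)
lemma is_K_mult[simp]: "is_K k \<Longrightarrow> is_K l \<Longrightarrow> is_K (k * l)"
  by (metis K_mult is_K_K is_K_def)
lemma is_K_add[simp]: "is_K k \<Longrightarrow> is_K l \<Longrightarrow> is_K (k + l)"
  by (metis K_add is_K_K is_K_def)
lemma is_K_diff[simp]: "is_K k \<Longrightarrow> is_K l \<Longrightarrow> is_K (k - l)"
  by (metis K_diff is_K_K is_K_def)
lemma is_K_uminus[simp]: "is_K k \<Longrightarrow> is_K (- k)"
  by (metis K_minus is_K_K is_K_def)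
lemma is_K_0[simp]: "is_K 0" by (metis K_0 is_K_K)
lemma is_K_1[simp]: "is_K 1" by (metis K_1 is_K_K)
lemma is_K_numeral[simp]: "is_K (numeral w)"
  by (simp add: is_K_def K_def numeral_fun)

lemma car_times1[simp]: "x \<in> cd_carrier n \<Longrightarrow> k * x \<in> cd_carrier n"
  by (simp add: car_iff fun_apps)
lemma car_times2[simp]: "x \<in> cd_carrier n \<Longrightarrow> x * k \<in> cd_carrier n"
  by (simp add: car_iff fun_apps)

definition E :: "nat \<Rightarrow> 'a::field" where "E = cd_scalar 1"
lemma scalar_E: "cd_scalar c = K c * E"
  by (simp add: E_def cd_scalar_def fun_eq_iff fun_apps)
lemma car_E[simp]: "E \<in> cd_carrier n" by (simp add: E_def)
lemma E_0[simp]: "E 0 = 1" by (simp add: E_def cd_scalar_def)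

lemma nat3_cases: obtains "n = 0" | "n = Suc 0" | k where "n = Suc (Suc k)"
  by (metis not0_implies_Suc)

lemma nat_induct3: "P 0 \<Longrightarrow> P (Suc 0) \<Longrightarrow> (\<And>k. P (Suc k) \<Longrightarrow> P (Suc (Suc k))) \<Longrightarrow> P n"
  by (induction n rule: less_induct) (metis lessI nat3_cases)

lemma conj_add: "cd_conj n (x + y) = cd_conj n x + cd_conj n y"
proof (induction n arbitrary: x y rule: nat_induct3)
  case (3 k) then show ?case by (simp add: lo_add hi_add pair_add)
qed (auto simp: fun_eq_iff fun_apps)

lemma conj_Kmult: "cd_conj n (K c * x) = K c * cd_conj n x"
proof (induction n arbitrary: x rule: nat_induct3)
  case (3 k) then show ?case by (simp add: lo_Kmult hi_Kmult pair_Kmult)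
qed (auto simp: fun_eq_iff fun_apps algebra_simps)

lemma additive_minus: assumes "\<And>x y. f (x + y) = f x + f y"
  shows "f (- x) = - f (x::'b::ab_group_add) \<and> f 0 = (0::'c::ab_group_add)"
proof -
  have z: "f 0 = 0" using assms[of 0 0] by simp
  have "f x + f (-x) = 0" using assms[of x "-x"] z by simp
  then show ?thesis using z by (metis add.commute add_eq_0_iff)
qed

lemma conj_uminus: "cd_conj n (- x) = - cd_conj n x"
  using additive_minus[of "cd_conj n", OF conj_add] by (rule conjunct1)
lemma conj_zero: "cd_conj n 0 = 0"
  using additive_minus[of "cd_conj n", OF conj_add] by (rule conjunct2)
lemma conj_diff: "cd_conj n (x - y) = cd_conj n x - cd_conj n y"
  by (simp only: diff_conv_add_uminus conj_add conj_uminus)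

context fixes \<mu> :: "'a::field" and \<gamma> :: "nat \<Rightarrow> 'a" begin

abbreviation mul where "mul \<equiv> cd_mul \<mu> \<gamma>"

lemma car_mul[simp]: "mul n x y \<in> cd_carrier n"
proof (cases n rule: nat3_cases)
  case (3 k) then show ?thesis using car_pair[of "Suc k"] by (simp add: Let_def)
qed (auto simp: car_iff fun_apps)

lemma mul_add_both: "mul n (x + y) z = mul n x z + mul n y z \<and> mul n z (x + y) = mul n z x + mul n z y"
proof (induction n arbitrary: x y z rule: nat_induct3)
  case (3 k) then show ?case by (simp add: Let_def lo_add hi_add pair_add conj_add algebra_simps)
qed (auto simp: fun_eq_iff fun_apps algebra_simps)

lemma mul_add_left: "mul n (x + y) z = mul n x z + mul n y z" using mul_add_both by simp
lemma mul_add_right: "mul n z (x + y) = mul n z x + mul n z y" using mul_add_both by simp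

lemma mul_Kmult_both: "mul n (K c * x) z = K c * mul n x z \<and> mul n z (K c * x) = K c * mul n z x"
proof (induction n arbitrary: x z rule: nat_induct3)
  case (3 k) then show ?case by (simp add: Let_def lo_Kmult hi_Kmult pair_Kmult conj_Kmult) (simp add: algebra_simps)
qed (auto simp: fun_eq_iff fun_apps algebra_simps)

lemma mul_Kmult_left: "mul n (K c * x) z = K c * mul n x z" using mul_Kmult_both by simp
lemma mul_Kmult_right: "mul n z (K c * x) = K c * mul n z x" using mul_Kmult_both by simp

lemma mul_uminus_left: "mul n (- x) z = - mul n x z"
  using additive_minus[of "\<lambda>x. mul n x z", OF mul_add_left] by (rule conjunct1)
lemma mul_zero_left: "mul n 0 z = 0"
  using additive_minus[of "\<lambda>x. mul n x z", OF mul_add_left] by (rule conjunct2)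
lemma mul_uminus_right: "mul n z (- x) = - mul n z x"
  using additive_minus[of "\<lambda>x. mul n z x", OF mul_add_right] by (rule conjunct1)
lemma mul_zero_right: "mul n z 0 = 0"
  using additive_minus[of "\<lambda>x. mul n z x", OF mul_add_right] by (rule conjunct2)
lemma mul_diff_left: "mul n (x - y) z = mul n x z - mul n y z"
  by (simp only: diff_conv_add_uminus mul_add_left mul_uminus_left)
lemma mul_diff_right: "mul n z (x - y) = mul n z x - mul n z y"
  by (simp only: diff_conv_add_uminus mul_add_right mul_uminus_right)

lemma mul_isK: "is_K k \<Longrightarrow> mul n (k * x) z = k * mul n x z"
  "is_K k \<Longrightarrow> mul n (x * k) z = mul n x z * k"
  "is_K k \<Longrightarrow> mul n z (k * x) = k * mul n z x"
  "is_K k \<Longrightarrow> mul n z (x * k) = mul n z x * k"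
  by (metis mul_Kmult_left mul_Kmult_right is_K_def mult.commute)+

lemmas lin = mul_add_left mul_add_right mul_Kmult_left mul_Kmult_right mul_uminus_left
  mul_uminus_right mul_zero_left mul_zero_right mul_diff_left mul_diff_right
  conj_add conj_Kmult conj_uminus conj_zero conj_diff


lemma car0: "x \<in> cd_carrier 0 \<Longrightarrow> i \<noteq> 0 \<Longrightarrow> x i = 0"
  by (simp add: car_iff)
lemma car1: "x \<in> cd_carrier (Suc 0) \<Longrightarrow> i \<noteq> 0 \<Longrightarrow> i \<noteq> 1 \<Longrightarrow> x i = 0"
  by (simp add: car_iff)

lemma mul_SS: "a \<in> cd_carrier (Suc k) \<Longrightarrow> b \<in> cd_carrier (Suc k) \<Longrightarrow>
  c \<in> cd_carrier (Suc k) \<Longrightarrow> d \<in> cd_carrier (Suc k) \<Longrightarrow>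
  mul (Suc (Suc k)) (cd_pair (Suc k) a b) (cd_pair (Suc k) c d) =
  cd_pair (Suc k) (mul (Suc k) a c + K (\<gamma> (Suc k)) * mul (Suc k) (cd_conj (Suc k) d) b)
     (mul (Suc k) d a + mul (Suc k) b (cd_conj (Suc k) c))"
  by (simp add: Let_def)

lemma conj_SS: "a \<in> cd_carrier (Suc k) \<Longrightarrow> b \<in> cd_carrier (Suc k) \<Longrightarrow>
  cd_conj (Suc (Suc k)) (cd_pair (Suc k) a b) = cd_pair (Suc k) (cd_conj (Suc k) a) (- b)"
  by simp

lemma conj_scalar[simp]: "cd_conj n (cd_scalar c) = cd_scalar c"
proof (induction n rule: nat_induct3)
  case (3 k)
  have "cd_conj (Suc (Suc k)) (cd_pair (Suc k) (cd_scalar c) 0) = cd_pair (Suc k) (cd_scalar c) 0"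
    using 3 by (simp only: conj_SS car_scalar car_0 neg_0_equal_iff_equal minus_zero)
  then show ?case by (simp only: scalar_pair[of c "Suc k", symmetric])
qed (auto simp: fun_eq_iff fun_apps cd_scalar_def)

lemma mul_scalar: "x \<in> cd_carrier n \<Longrightarrow> mul n (cd_scalar c) x = K c * x \<and> mul n x (cd_scalar c) = K c * x"
proof (induction n arbitrary: x rule: nat_induct3)
  case 1 then show ?case by (auto simp: fun_eq_iff fun_apps cd_scalar_def car0)
next
  case 2 then show ?case by (auto simp: fun_eq_iff fun_apps cd_scalar_def car1)
next
  case (3 k)
  obtain a b where ab: "a \<in> cd_carrier (Suc k)" "b \<in> cd_carrier (Suc k)" "x = cd_pair (Suc k) a b"
    using pair_obtain[OF 3(2)] by blast
  show ?case using ab 3(1)[of a] 3(1)[of b]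
    by (subst (1 2) scalar_pair[of c "Suc k"]) (simp add: mul_SS lin pair_Kmult)
qed

lemma mul_scalar_left[simp]: "x \<in> cd_carrier n \<Longrightarrow> mul n (cd_scalar c) x = K c * x"
  using mul_scalar by simp
lemma mul_scalar_right[simp]: "x \<in> cd_carrier n \<Longrightarrow> mul n x (cd_scalar c) = K c * x"
  using mul_scalar by simp

lemma conj_conj[simp]: "x \<in> cd_carrier n \<Longrightarrow> cd_conj n (cd_conj n x) = x"
proof (induction n arbitrary: x rule: nat_induct3)
  case 1 then show ?case by (auto simp: fun_eq_iff fun_apps car0)
next
  case 2 then show ?case by (auto simp: fun_eq_iff fun_apps car1)
next
  case (3 k)
  obtain a b where ab: "a \<in> cd_carrier (Suc k)" "b \<in> cd_carrier (Suc k)" "x = cd_pair (Suc k) a b"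
    using pair_obtain[OF 3(2)] by blast
  show ?case using ab 3(1)[of a] by (simp del: cd_conj.simps add: conj_SS)
qed

lemma conj_mul: "x \<in> cd_carrier n \<Longrightarrow> y \<in> cd_carrier n \<Longrightarrow>
   cd_conj n (mul n x y) = mul n (cd_conj n y) (cd_conj n x)"
proof (induction n arbitrary: x y rule: nat_induct3)
  case 1 then show ?case by (auto simp: fun_eq_iff fun_apps)
next
  case 2 then show ?case by (auto simp: fun_eq_iff fun_apps algebra_simps)
next
  case (3 k)
  obtain a b where ab: "a \<in> cd_carrier (Suc k)" "b \<in> cd_carrier (Suc k)" "x = cd_pair (Suc k) a b"
    using pair_obtain[OF 3(2)] by blast
  obtain c d where cd: "c \<in> cd_carrier (Suc k)" "d \<in> cd_carrier (Suc k)" "y = cd_pair (Suc k) c d"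
    using pair_obtain[OF 3(3)] by blast
  show ?case using ab cd 3(1)
    by (simp del: cd_conj.simps cd_mul.simps add: conj_SS mul_SS lin pair_uminus pair_eq)
qed

lemma conj_isK1: "is_K k \<Longrightarrow> cd_conj n (k * x) = k * cd_conj n x"
  by (metis conj_Kmult is_K_def)
lemma conj_isK2: "is_K k \<Longrightarrow> cd_conj n (x * k) = cd_conj n x * k"
  by (metis conj_Kmult is_K_def mult.commute)

lemma conj_E[simp]: "cd_conj n E = E" by (simp add: E_def)

lemma mul_E[simp]: "x \<in> cd_carrier n \<Longrightarrow> mul n E x = x" "x \<in> cd_carrier n \<Longrightarrow> mul n x E = x"
  by (simp_all add: E_def)

lemmas alg = lin mul_isK conj_isK1 conj_isK2 K_mult K_add K_diff K_minus algebra_simps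

lemma pair_KE: "cd_pair m (K t * E) 0 = K t * E"
  using scalar_pair[of t m] by (simp add: scalar_E)

lemma tr_ex: "x \<in> cd_carrier n \<Longrightarrow> \<exists>t. x + cd_conj n x = K t * E"
proof (induction n arbitrary: x rule: nat_induct3)
  case 1 then show ?case
    by (intro exI[of _ "2 * x 0"]) (auto simp: fun_eq_iff fun_apps E_def cd_scalar_def car0)
next
  case 2 then show ?case
    by (intro exI[of _ "2 * x 0 + x 1"]) (auto simp: fun_eq_iff fun_apps E_def cd_scalar_def car1)
next
  case (3 k)
  obtain a b where ab: "a \<in> cd_carrier (Suc k)" "b \<in> cd_carrier (Suc k)" "x = cd_pair (Suc k) a b"
    using pair_obtain[OF 3(2)] by blast
  obtain t where t: "a + cd_conj (Suc k) a = K t * E" using 3(1)[OF ab(1)] by blast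
  have "x + cd_conj (Suc (Suc k)) x = cd_pair (Suc k) (a + cd_conj (Suc k) a) 0"
    using ab by (simp del: cd_conj.simps add: conj_SS pair_add)
  then show ?case using t pair_KE by metis
qed

definition tr where "tr n x = (x + cd_conj n x) 0"

lemma tr: "x \<in> cd_carrier n \<Longrightarrow> x + cd_conj n x = K (tr n x) * E"
proof -
  assume "x \<in> cd_carrier n"
  then obtain t where t: "x + cd_conj n x = K t * E" using tr_ex by blast
  then have "tr n x = t" by (simp add: tr_def fun_apps)
  then show ?thesis using t by simp
qed

lemma conj_eq: "x \<in> cd_carrier n \<Longrightarrow> cd_conj n x = K (tr n x) * E - x"
  using tr by (metis add_diff_cancel_left')

lemma norm_ex: "x \<in> cd_carrier n \<Longrightarrow> \<exists>c. mul n x (cd_conj n x) = K c * E \<and> mul n (cd_conj n x) x = K c * E"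
proof (induction n arbitrary: x rule: nat_induct3)
  case 1 then show ?case
    by (intro exI[of _ "x 0 * x 0"]) (auto simp: fun_eq_iff fun_apps E_def cd_scalar_def car0)
next
  case 2 then show ?case
    by (intro exI[of _ "x 0 * x 0 + x 0 * x 1 - \<mu> * x 1 * x 1"])
      (auto simp: fun_eq_iff fun_apps E_def cd_scalar_def car1 algebra_simps)
next
  case (3 k)
  obtain a b where ab: "a \<in> cd_carrier (Suc k)" "b \<in> cd_carrier (Suc k)" "x = cd_pair (Suc k) a b"
    using pair_obtain[OF 3(2)] by blast
  obtain ca where ca: "mul (Suc k) a (cd_conj (Suc k) a) = K ca * E" "mul (Suc k) (cd_conj (Suc k) a) a = K ca * E"
    using 3(1)[OF ab(1)] by blast
  obtain cb where cb: "mul (Suc k) b (cd_conj (Suc k) b) = K cb * E" "mul (Suc k) (cd_conj (Suc k) b) b = K cb * E"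
    using 3(1)[OF ab(2)] by blast
  have "mul (Suc (Suc k)) x (cd_conj (Suc (Suc k)) x) = cd_pair (Suc k) (K (ca - \<gamma> (Suc k) * cb) * E) 0"
    using ab ca cb by (simp del: cd_conj.simps cd_mul.simps add: conj_SS mul_SS lin K_diff K_mult algebra_simps)
  moreover have "mul (Suc (Suc k)) (cd_conj (Suc (Suc k)) x) x = cd_pair (Suc k) (K (ca - \<gamma> (Suc k) * cb) * E) 0"
    using ab ca cb by (simp del: cd_conj.simps cd_mul.simps add: conj_SS mul_SS lin K_diff K_mult algebra_simps)
  ultimately show ?case using pair_KE by metis
qed

definition nm where "nm n x = mul n x (cd_conj n x) 0"

lemma nm: "x \<in> cd_carrier n \<Longrightarrow> mul n x (cd_conj n x) = K (nm n x) * E"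
   "x \<in> cd_carrier n \<Longrightarrow> mul n (cd_conj n x) x = K (nm n x) * E"
proof -
  assume "x \<in> cd_carrier n"
  then obtain c where c: "mul n x (cd_conj n x) = K c * E" "mul n (cd_conj n x) x = K c * E" using norm_ex by blast
  then have "nm n x = c" by (simp add: nm_def fun_apps)
  then show "mul n x (cd_conj n x) = K (nm n x) * E" "mul n (cd_conj n x) x = K (nm n x) * E" using c by simp_all
qed

lemma mul_self: "x \<in> cd_carrier n \<Longrightarrow> mul n x x = K (tr n x) * x - K (nm n x) * E"
proof -
  assume x: "x \<in> cd_carrier n"
  have "mul n x x = mul n x (K (tr n x) * E - cd_conj n x)" using conj_eq[OF x] by simp
  also have "\<dots> = K (tr n x) * x - K (nm n x) * E" using x nm(1)[OF x] by (simp add: lin)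
  finally show ?thesis .
qed


definition flex where "flex n \<longleftrightarrow> (\<forall>x\<in>cd_carrier n. \<forall>y\<in>cd_carrier n. mul n (mul n x y) x = mul n x (mul n y x))"

lemma flex_lin:
  assumes f: "flex n" and x: "x \<in> cd_carrier n" and y: "y \<in> cd_carrier n" and z: "z \<in> cd_carrier n"
  shows "mul n (mul n x y) z = mul n x (mul n y z) - mul n (mul n z y) x + mul n z (mul n y x)"
proof -
  have h: "mul n (mul n (x+z) y) (x+z) = mul n (x+z) (mul n y (x+z))" using f x y z by (simp add: flex_def)
  have hx: "mul n (mul n x y) x = mul n x (mul n y x)" using f x y by (simp add: flex_def)
  have hz: "mul n (mul n z y) z = mul n z (mul n y z)" using f z y by (simp add: flex_def)
  have "mul n (mul n x y) z - (mul n x (mul n y z) - mul n (mul n z y) x + mul n z (mul n y x)) =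
    (mul n (mul n (x+z) y) (x+z) - mul n (x+z) (mul n y (x+z))) - (mul n (mul n x y) x - mul n x (mul n y x))
     - (mul n (mul n z y) z - mul n z (mul n y z))"
    by (simp add: lin algebra_simps)
  then show ?thesis using h hx hz by simp
qed

lemma E2:
  assumes f: "flex n" and u: "u \<in> cd_carrier n" and b: "b \<in> cd_carrier n"
  shows "mul n (mul n u (cd_conj n b)) b = mul n (cd_conj n b) (mul n b u)"
proof -
  have FL: "mul n (mul n u b) b = mul n u (mul n b b) - mul n (mul n b b) u + mul n b (mul n b u)"
    using flex_lin[OF f u b b] .
  show ?thesis using u b by (simp add: FL conj_eq[OF b] mul_self[OF b] alg)
qed

lemma E3:
  assumes f: "flex n" and a: "a \<in> cd_carrier n" and b: "b \<in> cd_carrier n" and d: "d \<in> cd_carrier n"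
  shows "mul n a (mul n (cd_conj n b) d) = mul n (mul n (cd_conj n d) b) a + mul n (cd_conj n b) (mul n d a) - mul n (mul n a (cd_conj n d)) b"
proof -
  have F1: "mul n (mul n a d) b = mul n a (mul n d b) - mul n (mul n b d) a + mul n b (mul n d a)"
    using flex_lin[OF f a d b] .
  define w where "w = mul n b (cd_conj n d)"
  have w: "w \<in> cd_carrier n" by (simp add: w_def)
  obtain \<nu> where nu: "w + cd_conj n w = K \<nu> * E" using tr[OF w] by blast
  have cw: "cd_conj n w = mul n d (cd_conj n b)" using b d by (simp add: w_def conj_mul)
  have "K (tr n d) * b - mul n b d + (K (tr n b) * d - mul n d b) = K \<nu> * E"
    using nu b d unfolding cw by (simp add: w_def conj_eq[OF b] conj_eq[OF d] lin)
  then have F2: "mul n d b = K (tr n d) * b + K (tr n b) * d - K \<nu> * E - mul n b d"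
    by (simp add: algebra_simps)
  show ?thesis using a b d by (simp add: F1 F2 conj_eq[OF b] conj_eq[OF d] alg)
qed


lemma flex_all: "flex n"
proof (induction n rule: nat_induct3)
  case 1 then show ?case by (auto simp: flex_def fun_eq_iff fun_apps algebra_simps)
next
  case 2 then show ?case by (auto simp: flex_def fun_eq_iff fun_apps algebra_simps)
next
  case (3 k)
  note f = 3
  show ?case unfolding flex_def
  proof (intro ballI)
    fix x y :: "nat \<Rightarrow> 'a" assume x: "x \<in> cd_carrier (Suc (Suc k))" and y: "y \<in> cd_carrier (Suc (Suc k))"
    obtain a b where ab: "a \<in> cd_carrier (Suc k)" "b \<in> cd_carrier (Suc k)" "x = cd_pair (Suc k) a b"
      using pair_obtain[OF x] by blast
    obtain c d where cd: "c \<in> cd_carrier (Suc k)" "d \<in> cd_carrier (Suc k)" "y = cd_pair (Suc k) c d"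
      using pair_obtain[OF y] by blast
    have fl: "mul (Suc k) (mul (Suc k) a c) a = mul (Suc k) a (mul (Suc k) c a)"
      using f ab cd by (simp add: flex_def)
    note e2 = E2[OF f _ ab(2), of "cd_conj (Suc k) c", simplified]
    note e3 = E3[OF f ab(1) ab(2) cd(2)]
    show "mul (Suc (Suc k)) (mul (Suc (Suc k)) x y) x = mul (Suc (Suc k)) x (mul (Suc (Suc k)) y x)"
      using ab cd
      apply (simp del: cd_conj.simps cd_mul.simps add: conj_SS mul_SS lin pair_uminus pair_eq conj_mul)
      apply (rule conjI)
       apply (simp add: fl e2 e3 alg)
      apply (simp add: conj_eq[OF ab(1)] conj_eq[OF cd(1)] alg)
      done
  qed
qed


lemma main:
  assumes a: "a \<in> cd_carrier (Suc k)" and b: "b \<in> cd_carrier (Suc k)"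
    and alta: "cd_alternative \<mu> \<gamma> (Suc k) a" and altb: "cd_alternative \<mu> \<gamma> (Suc k) b"
    and AS: "\<forall>z\<in>cd_carrier (Suc k). mul (Suc k) (mul (Suc k) a z) b = mul (Suc k) a (mul (Suc k) z b) \<and>
                mul (Suc k) (mul (Suc k) b z) a = mul (Suc k) b (mul (Suc k) z a)"
  shows "cd_alternative \<mu> \<gamma> (Suc (Suc k)) (cd_pair (Suc k) a b)"
proof -
  let ?m = "Suc k"
  have AS1: "\<And>z. z \<in> cd_carrier ?m \<Longrightarrow> mul ?m (mul ?m a z) b = mul ?m a (mul ?m z b)" using AS by blast
  have AS2: "\<And>z. z \<in> cd_carrier ?m \<Longrightarrow> mul ?m (mul ?m b z) a = mul ?m b (mul ?m z a)" using AS by blast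
  have La: "\<And>z. z \<in> cd_carrier ?m \<Longrightarrow> mul ?m a (mul ?m a z) = K (tr ?m a) * mul ?m a z - K (nm ?m a) * z"
    using alta a by (simp add: cd_alternative_def mul_self[OF a] lin)
  have Ra: "\<And>z. z \<in> cd_carrier ?m \<Longrightarrow> mul ?m (mul ?m z a) a = K (tr ?m a) * mul ?m z a - K (nm ?m a) * z"
    using alta a by (simp add: cd_alternative_def mul_self[OF a] lin)
  have Lb: "\<And>z. z \<in> cd_carrier ?m \<Longrightarrow> mul ?m b (mul ?m b z) = K (tr ?m b) * mul ?m b z - K (nm ?m b) * z"
    using altb b by (simp add: cd_alternative_def mul_self[OF b] lin)
  have Rb: "\<And>z. z \<in> cd_carrier ?m \<Longrightarrow> mul ?m (mul ?m z b) b = K (tr ?m b) * mul ?m z b - K (nm ?m b) * z"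
    using altb b by (simp add: cd_alternative_def mul_self[OF b] lin)
  show ?thesis unfolding cd_alternative_def
  proof (intro conjI ballI)
    show "cd_pair (Suc k) a b \<in> cd_carrier (Suc (Suc k))" by simp
  next
    fix y :: "nat \<Rightarrow> 'a" assume y: "y \<in> cd_carrier (Suc (Suc k))"
    obtain c d where cd: "c \<in> cd_carrier (Suc k)" "d \<in> cd_carrier (Suc k)" "y = cd_pair (Suc k) c d"
      using pair_obtain[OF y] by blast
    show "mul (Suc (Suc k)) (cd_pair (Suc k) a b) (mul (Suc (Suc k)) (cd_pair (Suc k) a b) y) =
          mul (Suc (Suc k)) (mul (Suc (Suc k)) (cd_pair (Suc k) a b) (cd_pair (Suc k) a b)) y"
      using a b cd
      apply (simp del: cd_conj.simps cd_mul.simps add: conj_SS mul_SS lin pair_uminus pair_eq conj_mul)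
      apply (simp add: AS1 AS2 La Ra Lb Rb conj_eq[OF a] conj_eq[OF b] mul_self[OF a] mul_self[OF b] alg)
      done
    show "mul (Suc (Suc k)) (mul (Suc (Suc k)) y (cd_pair (Suc k) a b)) (cd_pair (Suc k) a b) =
          mul (Suc (Suc k)) y (mul (Suc (Suc k)) (cd_pair (Suc k) a b) (cd_pair (Suc k) a b))"
      using a b cd
      apply (simp del: cd_conj.simps cd_mul.simps add: conj_SS mul_SS lin pair_uminus pair_eq conj_mul)
      apply (simp add: AS1 AS2 La Ra Lb Rb conj_eq[OF a] conj_eq[OF b] mul_self[OF a] mul_self[OF b] alg)
      done
  qed
qed


lemma AS_cond:
  assumes a: "a \<in> cd_carrier (Suc k)" and b: "b \<in> cd_carrier (Suc k)"
    and h: "(\<exists>c. a = cd_scalar c) \<or> (\<exists>c. b = cd_scalar c) \<or> cd_span1 a = cd_span1 b"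
  shows "\<forall>z\<in>cd_carrier (Suc k). mul (Suc k) (mul (Suc k) a z) b = mul (Suc k) a (mul (Suc k) z b) \<and>
                mul (Suc k) (mul (Suc k) b z) a = mul (Suc k) b (mul (Suc k) z a)"
proof
  fix z :: "nat \<Rightarrow> 'a" assume z: "z \<in> cd_carrier (Suc k)"
  have fl: "mul (Suc k) (mul (Suc k) b z) b = mul (Suc k) b (mul (Suc k) z b)"
    using flex_all[of "Suc k"] b z by (simp add: flex_def)
  consider (A) c where "a = cd_scalar c" | (B) c where "b = cd_scalar c" | (C) "cd_span1 a = cd_span1 b"
    using h by blast
  then show "mul (Suc k) (mul (Suc k) a z) b = mul (Suc k) a (mul (Suc k) z b) \<and>
                mul (Suc k) (mul (Suc k) b z) a = mul (Suc k) b (mul (Suc k) z a)"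
  proof cases
    case (A c) then show ?thesis using a b z by (simp add: scalar_E alg)
  next
    case (B c) then show ?thesis using a b z by (simp add: scalar_E alg)
  next
    case C
    have "a = cd_add (cd_scalar 0) (cd_smul 1 a)" by (simp add: scalar_E)
    then have "a \<in> cd_span1 a" unfolding cd_span1_def by blast
    then have "a \<in> cd_span1 b" using C by simp
    then obtain \<alpha> \<beta> where ab: "a = K \<alpha> * E + K \<beta> * b"
      unfolding cd_span1_def by (auto simp: scalar_E)
    show ?thesis using b z fl by (simp add: ab alg)
  qed
qed

end

theorem proposition2p2:
  fixes \<mu> :: "'a::field" and \<gamma> :: "nat \<Rightarrow> 'a" and n :: nat and a b :: "nat \<Rightarrow> 'a"
  assumes "1 \<le> n"
    and "4 * \<mu> + 1 \<noteq> 0"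
    and "\<forall>k\<in>{1..n}. \<gamma> k \<noteq> 0"
    and "a \<in> cd_carrier n" and "b \<in> cd_carrier n"
    and "cd_alternative \<mu> \<gamma> n a" and "cd_alternative \<mu> \<gamma> n b"
    and "(\<exists>c. a = cd_scalar c) \<or> (\<exists>c. b = cd_scalar c) \<or> cd_span1 a = cd_span1 b"
  shows "cd_alternative \<mu> \<gamma> (Suc n) (cd_pair n a b)"
proof -
  obtain k where n: "n = Suc k" using assms(1) by (cases n) auto
  show ?thesis using assms unfolding n
    by (intro main AS_cond) auto
qed

end
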